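(* Let $2\le n\le N$ and $k\ge0$, and assume that the property $(\mathbf{SS}.N.I.k.\tilde n)$ holds for all $\tilde n\in[1,n-1]$. Then for every partially interactive $n$-particle cube $\Lambda^{(n)}_{L_{k+1}}(\mathbf u)$, $$\mathbb P\Big\{\Lambda^{(n)}_{L_{k+1}}(\mathbf u)\text{ is }(\tfrac12,I)\text{-PT}\Big\}\le 3^{2(n-1)d}L_{k+1}^{-\frac{p^{(n-1)}}2+2(n-1)d}.$$
   Context: Setting. Fix $N\ge2$, $d\ge1$, $r>0$, $g\ne0$. For $1\le m\le N$, points of $\mathbb Z^{md}$ are $\mathbf x=(x_1,\dots,x_m)$, $x_j\in\mathbb Z^d$, with $\|x_j\|=\max_i|x_j^{(i)}|$, $\|\mathbf x\|=\max_j\|x_j\|$, $\langle\mathbf x\rangle=\max\{1,\|\mathbf x\|\}$. The random $m$-particle operator is $\mathbf H^{(m)}_\omega=\frac1g(\mathbf T+\mathbf U)+\mathbf V(\cdot,\omega)$: $\mathbf T(\mathbf x,\mathbf y)=\langle y_j-x_j\rangle^{-r}$ if there is $j$ with $x_i=y_i$ for all $i\ne j$, else $0$; $\mathbf U(\mathbf x)=\sum_{j_1<j_2}U(x_{j_1},x_{j_2})$ with $U$ symmetric, $|U|\le M_1$, $U(x,x')=0$ if $\|x-x'\|\ge\mathrm r_0$ ($\mathrm r_0\ge1$); $\mathbf V(\mathbf x,\omega)=\sum_jV(x_j,\omega)$ with $V(x,\omega)$, $x\in\mathbb Z^d$, i.i.d. with distribution $\mu$ supported in $[-M,M]$ and Hölder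 continuous of order $\rho>0$. Cubes $\Lambda^{(m)}_L(\mathbf u)=\{\mathbf x:\|\mathbf x-\mathbf u\|\le L\}$; $\mathbf H^{(m)}_\Lambda$ is the restriction to $\Lambda$, $\mathbf G^{(m)}_\Lambda(E)=(\mathbf H^{(m)}_\Lambda-E)^{-1}$. Projections $\Pi_j\mathbf x=x_j$, $\Pi_J\Lambda=\bigcup_{j\in J}\Pi_j\Lambda$, $\Pi\Lambda=\Pi_{\{1,\dots,m\}}\Lambda$. Separability: $\Lambda^{(m)}_L(\mathbf u),\Lambda^{(m)}_L(\mathbf v)$ are weakly separable if for some nonempty $J\subseteq\{1,\dots,m\}$ either $\Pi_J\Lambda^{(m)}_{L+\mathrm r_0}(\mathbf u)\cap(\Pi_{J^C}\Lambda^{(m)}_{L+\mathrm r_0}(\mathbf u)\cup\Pi\Lambda^{(m)}_{L+\mathrm r_0}(\mathbf v))=\emptyset$ or the same with $\mathbf u,\mathbf v$ swapped; separable if in addition $\|\mathbf u-\mathbf v\|>11mL$. PI/FI: $\Lambda^{(n)}_L(\mathbf u)$ is fully interactive if $\min_{x\in\mathbb Z^d}\max_j\|u_j-x\|\le2n(L+\mathrm r_0)$ and partially interactive (PI) otherwise. For a PI cube there is a nonempty proper $J$ with $\Pi_J\Lambda^{(n)}_{L+\mathrm r_0}(\mathbf u)\cap\Pi_{J^C}\Lambda^{(n)}_{L+\mathrm r_0}(\mathbf u)=\emptyset$, giving the canonical decomposition $\Lambda^{(n)}_L(\mathbf u)=\Lambda^{(n')}_L(\mathbf u')\times\Lambda^{(n'')}_L(\mathbf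 u'')$, $n'=|J|$, $\mathbf u'=(u_j)_{j\in J}$, $\mathbf u''=(u_j)_{j\in J^C}$. Sobolev norm of a matrix $\mathcal M$ on $X\times Y$: $\|\mathcal M\|_s^2=C_0\sum_{\mathbf v\in X-Y}(\sup_{\mathbf x-\mathbf y=\mathbf v}|\mathcal M(\mathbf x,\mathbf y)|)^2\langle\mathbf v\rangle^{2s}$, $C_0=C_0(s_0^{(m)})>0$ fixed. With parameters $\tau_m\ge0$, $md/2<s_0^{(m)}\le r_m<r-md/2$, an $m$-particle cube $\Lambda^{(m)}_L(\mathbf u)$ is $(E,\tfrac12)$-NS if $\mathbf G^{(m)}_{\Lambda^{(m)}_L(\mathbf u)}(E)$ exists and $\|\mathbf G^{(m)}_{\Lambda^{(m)}_L(\mathbf u)}(E)\|_s\le L^{\tau_m+s/2}$ for all $s\in[s_0^{(m)},r_m]$, and $(E,\tfrac12)$-S otherwise. Parameters: $I=[-MN-1,MN+1]$, $p^{(m)}=18^{N-m}p_0$ with $p_0\ge20Nd$, $L_k=L_0^{4^k}$. Property $(\mathbf{SS}.N.I.k.m)$: for every pair of separable $m$-particle cubes $\Lambda^{(m)}_{L_k}(\mathbf x),\Lambda^{(m)}_{L_k}(\mathbf y)$, $\mathbb P\{\exists E\in I:\text{both }(E,\tfrac12)\text{-S}\}<L_k^{-2p^{(m)}}$. Tunneling: an $m$-particle cube $\Lambda^{(m)}_{L_{k+1}}(\mathbf u)$ is $(\tfrac12,I)$-tunneling if there exist $E\in I$ and two separable $(E,\tfrac12)$-S cubes $\Lambda^{(m)}_{L_k}(\mathbf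 x),\Lambda^{(m)}_{L_k}(\mathbf y)\subset\Lambda^{(m)}_{L_{k+1}}(\mathbf u)$. A PI cube $\Lambda^{(n)}_{L_{k+1}}(\mathbf u)$ with canonical decomposition $\Lambda^{(n')}_{L_{k+1}}(\mathbf u')\times\Lambda^{(n'')}_{L_{k+1}}(\mathbf u'')$ is $(\tfrac12,I)$-partially tunneling ($(\tfrac12,I)$-PT) if at least one of $\Lambda^{(n')}_{L_{k+1}}(\mathbf u')$, $\Lambda^{(n'')}_{L_{k+1}}(\mathbf u'')$ is $(\tfrac12,I)$-tunneling. *)

theory Defs
  imports "HOL-Probability.Probability"
begin

text \<open>Single-particle sites are points of \<open>\<int>^d\<close>, rendered as \<open>int^'d\<close> with \<open>d = CARD('d)\<close>.
  An m-particle configuration is a list of m sites (particle j is the j-th entry, 0-based).\<close>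

type_synonym 'd site = "int^'d"
type_synonym 'd conf = "'d site list"

definition snorm :: "'d::finite site \<Rightarrow> real" where
  "snorm v = real_of_int (Max (range (\<lambda>i. \<bar>v$i\<bar>)))"

definition sbr :: "'d::finite site \<Rightarrow> real" where
  "sbr v = max 1 (snorm v)"

definition cdiff :: "'d::finite conf \<Rightarrow> 'd conf \<Rightarrow> 'd conf" where
  "cdiff x y = map2 (-) x y"

definition cnorm :: "'d::finite conf \<Rightarrow> real" where
  "cnorm x = Max (insert 0 (set (map snorm x)))"

definition cbr :: "'d::finite conf \<Rightarrow> real" where
  "cbr x = max 1 (cnorm x)"

definition cube :: "nat \<Rightarrow> real \<Rightarrow> 'd::finite conf \<Rightarrow> 'd conf set" where
  "cube m L u = {x. length x = m \<and> cnorm (cdiff x u) \<le> L}"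

definition proj :: "nat set \<Rightarrow> 'd conf set \<Rightarrow> 'd site set" where
  "proj J A = (\<Union>j\<in>J. (\<lambda>x. x ! j) ` A)"

definition weakly_separable :: "real \<Rightarrow> nat \<Rightarrow> real \<Rightarrow> 'd::finite conf \<Rightarrow> 'd conf \<Rightarrow> bool" where
  "weakly_separable r0 m L u v =
     (\<exists>J. J \<noteq> {} \<and> J \<subseteq> {0..<m} \<and>
        (proj J (cube m (L + r0) u) \<inter>
           (proj ({0..<m} - J) (cube m (L + r0) u) \<union> proj {0..<m} (cube m (L + r0) v)) = {}
         \<or> proj J (cube m (L + r0) v) \<inter>
           (proj ({0..<m} - J) (cube m (L + r0) v) \<union> proj {0..<m} (cube m (L + r0) u)) = {}))"

definition separable :: "real \<Rightarrow> nat \<Rightarrow> real \<Rightarrow> 'd::finite conf \<Rightarrow> 'd conf \<Rightarrow> bool" where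
  "separable r0 m L u v = (weakly_separable r0 m L u v \<and> cnorm (cdiff u v) > 11 * real m * L)"

definition fully_interactive :: "real \<Rightarrow> nat \<Rightarrow> real \<Rightarrow> 'd::finite conf \<Rightarrow> bool" where
  "fully_interactive r0 n L u =
     (\<exists>x::'d site. Max ((\<lambda>j. snorm (u ! j - x)) ` {0..<n}) \<le> 2 * real n * (L + r0))"

definition partially_interactive :: "real \<Rightarrow> nat \<Rightarrow> real \<Rightarrow> 'd::finite conf \<Rightarrow> bool" where
  "partially_interactive r0 n L u = (\<not> fully_interactive r0 n L u)"

text \<open>Kinetic term \<open>T\<close>: if x and y differ in at most one particle j, the value is
  \<open>\<langle>y_j - x_j\<rangle>^{-r}\<close> (the maximum below equals that bracket, and equals 1 when x = y).\<close>
definition Tkin :: "real \<Rightarrow> 'd::finite conf \<Rightarrow> 'd conf \<Rightarrow> real" where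
  "Tkin r x y =
     (if \<exists>j<length x. \<forall>i<length x. i \<noteq> j \<longrightarrow> x ! i = y ! i
      then (Max ((\<lambda>j. sbr (y ! j - x ! j)) ` {0..<length x})) powr (- r)
      else 0)"

definition Uint :: "('d site \<Rightarrow> 'd site \<Rightarrow> real) \<Rightarrow> 'd conf \<Rightarrow> real" where
  "Uint U x = (\<Sum>j2<length x. \<Sum>j1<j2. U (x ! j1) (x ! j2))"

definition Vpot :: "('d site \<Rightarrow> 'w \<Rightarrow> real) \<Rightarrow> 'd conf \<Rightarrow> 'w \<Rightarrow> real" where
  "Vpot V x \<omega> = (\<Sum>j<length x. V (x ! j) \<omega>)"

text \<open>Matrix entries of \<open>H = (1/g)(T + U) + V\<close> (restricted to a cube by restricting indices).\<close>
definition Hop :: "real \<Rightarrow> real \<Rightarrow> ('d::finite site \<Rightarrow> 'd site \<Rightarrow> real) \<Rightarrow> ('d site \<Rightarrow> 'w \<Rightarrow> real)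
                   \<Rightarrow> 'w \<Rightarrow> 'd conf \<Rightarrow> 'd conf \<Rightarrow> real" where
  "Hop g r U V \<omega> x y =
     (Tkin r x y + (if x = y then Uint U x else 0)) / g + (if x = y then Vpot V x \<omega> else 0)"

definition is_inverse_on :: "'a set \<Rightarrow> ('a \<Rightarrow> 'a \<Rightarrow> real) \<Rightarrow> ('a \<Rightarrow> 'a \<Rightarrow> real) \<Rightarrow> bool" where
  "is_inverse_on \<Lambda> A G =
     (\<forall>x\<in>\<Lambda>. \<forall>y\<in>\<Lambda>. (\<Sum>z\<in>\<Lambda>. A x z * G z y) = (if x = y then 1 else 0)
                    \<and> (\<Sum>z\<in>\<Lambda>. G x z * A z y) = (if x = y then 1 else 0))"

definition sobolev :: "real \<Rightarrow> 'd::finite conf set \<Rightarrow> ('d conf \<Rightarrow> 'd conf \<Rightarrow> real) \<Rightarrow> real \<Rightarrow> real" where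
  "sobolev C0 \<Lambda> G s =
     sqrt (C0 * (\<Sum>v \<in> (\<lambda>(x, y). cdiff x y) ` (\<Lambda> \<times> \<Lambda>).
        (Max {\<bar>G x y\<bar> | x y. x \<in> \<Lambda> \<and> y \<in> \<Lambda> \<and> cdiff x y = v})\<^sup>2 * cbr v powr (2 * s)))"

definition NS :: "real \<Rightarrow> real \<Rightarrow> ('d::finite site \<Rightarrow> 'd site \<Rightarrow> real) \<Rightarrow> ('d site \<Rightarrow> 'w \<Rightarrow> real)
        \<Rightarrow> (nat \<Rightarrow> real) \<Rightarrow> (nat \<Rightarrow> real) \<Rightarrow> (nat \<Rightarrow> real) \<Rightarrow> (nat \<Rightarrow> real)
        \<Rightarrow> nat \<Rightarrow> real \<Rightarrow> 'd conf \<Rightarrow> real \<Rightarrow> 'w \<Rightarrow> bool" where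
  "NS g r U V C0 tau s0 rr m L u E \<omega> =
     (\<exists>G. is_inverse_on (cube m L u) (\<lambda>x y. Hop g r U V \<omega> x y - (if x = y then E else 0)) G
        \<and> (\<forall>s. s0 m \<le> s \<and> s \<le> rr m \<longrightarrow>
               sobolev (C0 m) (cube m L u) G s \<le> L powr (tau m + s / 2)))"

definition Lk :: "nat \<Rightarrow> nat \<Rightarrow> real" where
  "Lk L0 k = real L0 ^ (4 ^ k)"

definition pexp :: "nat \<Rightarrow> real \<Rightarrow> nat \<Rightarrow> real" where
  "pexp N p0 m = 18 ^ (N - m) * p0"

definition Ienergy :: "nat \<Rightarrow> real \<Rightarrow> real set" where
  "Ienergy N M = {- M * real N - 1 .. M * real N + 1}"

text \<open>Outer probability (coincides with \<open>measure P A\<close> for events \<open>A\<close>).\<close>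
definition oprob :: "'w measure \<Rightarrow> 'w set \<Rightarrow> real" where
  "oprob P A = Inf {measure P B | B. B \<in> sets P \<and> A \<subseteq> B}"

definition SSprop :: "'w measure \<Rightarrow> real \<Rightarrow> real \<Rightarrow> real \<Rightarrow> ('d::finite site \<Rightarrow> 'd site \<Rightarrow> real)
        \<Rightarrow> ('d site \<Rightarrow> 'w \<Rightarrow> real) \<Rightarrow> (nat \<Rightarrow> real) \<Rightarrow> (nat \<Rightarrow> real) \<Rightarrow> (nat \<Rightarrow> real) \<Rightarrow> (nat \<Rightarrow> real)
        \<Rightarrow> nat \<Rightarrow> real \<Rightarrow> real \<Rightarrow> nat \<Rightarrow> nat \<Rightarrow> nat \<Rightarrow> bool" where
  "SSprop P r0 g r U V C0 tau s0 rr N M p0 L0 k m =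
     (\<forall>x y :: 'd conf. length x = m \<and> length y = m \<and> separable r0 m (Lk L0 k) x y \<longrightarrow>
        oprob P {\<omega> \<in> space P. \<exists>E\<in>Ienergy N M.
            \<not> NS g r U V C0 tau s0 rr m (Lk L0 k) x E \<omega> \<and> \<not> NS g r U V C0 tau s0 rr m (Lk L0 k) y E \<omega>}
        < Lk L0 k powr (- 2 * pexp N p0 m))"

definition tunneling :: "real \<Rightarrow> real \<Rightarrow> real \<Rightarrow> ('d::finite site \<Rightarrow> 'd site \<Rightarrow> real)
        \<Rightarrow> ('d site \<Rightarrow> 'w \<Rightarrow> real) \<Rightarrow> (nat \<Rightarrow> real) \<Rightarrow> (nat \<Rightarrow> real) \<Rightarrow> (nat \<Rightarrow> real) \<Rightarrow> (nat \<Rightarrow> real)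
        \<Rightarrow> nat \<Rightarrow> real \<Rightarrow> nat \<Rightarrow> nat \<Rightarrow> nat \<Rightarrow> 'd conf \<Rightarrow> 'w \<Rightarrow> bool" where
  "tunneling r0 g r U V C0 tau s0 rr N M L0 k m u \<omega> =
     (\<exists>E\<in>Ienergy N M. \<exists>x y :: 'd conf. length x = m \<and> length y = m \<and>
        separable r0 m (Lk L0 k) x y \<and>
        cube m (Lk L0 k) x \<subseteq> cube m (Lk L0 (Suc k)) u \<and>
        cube m (Lk L0 k) y \<subseteq> cube m (Lk L0 (Suc k)) u \<and>
        \<not> NS g r U V C0 tau s0 rr m (Lk L0 k) x E \<omega> \<and> \<not> NS g r U V C0 tau s0 rr m (Lk L0 k) y E \<omega>)"

definition decomposes :: "real \<Rightarrow> nat \<Rightarrow> real \<Rightarrow> 'd::finite conf \<Rightarrow> nat set \<Rightarrow> bool" where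
  "decomposes r0 n L u J =
     (J \<noteq> {} \<and> J \<subset> {0..<n} \<and>
      proj J (cube n (L + r0) u) \<inter> proj ({0..<n} - J) (cube n (L + r0) u) = {})"

definition partially_tunneling :: "real \<Rightarrow> real \<Rightarrow> real \<Rightarrow> ('d::finite site \<Rightarrow> 'd site \<Rightarrow> real)
        \<Rightarrow> ('d site \<Rightarrow> 'w \<Rightarrow> real) \<Rightarrow> (nat \<Rightarrow> real) \<Rightarrow> (nat \<Rightarrow> real) \<Rightarrow> (nat \<Rightarrow> real) \<Rightarrow> (nat \<Rightarrow> real)
        \<Rightarrow> nat \<Rightarrow> real \<Rightarrow> nat \<Rightarrow> nat \<Rightarrow> nat \<Rightarrow> 'd conf \<Rightarrow> nat set \<Rightarrow> 'w \<Rightarrow> bool" where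
  "partially_tunneling r0 g r U V C0 tau s0 rr N M L0 k n u J \<omega> =
     (tunneling r0 g r U V C0 tau s0 rr N M L0 k (card J) (nths u J) \<omega>
      \<or> tunneling r0 g r U V C0 tau s0 rr N M L0 k (n - card J) (nths u ({0..<n} - J)) \<omega>)"

end

theory Submission
  imports Defs
begin


lemma oprob_le:
  assumes "prob_space P" "B \<in> sets P" "A \<subseteq> B"
  shows "oprob P A \<le> measure P B"
  unfolding oprob_def
  by (rule cInf_lower) (use assms in \<open>auto intro!: bdd_belowI[of _ 0]\<close>)

lemma oprob_Un:
  assumes P: "prob_space P" and A: "A \<subseteq> space P" and B: "B \<subseteq> space P"
  shows "oprob P (A \<union> B) \<le> oprob P A + oprob P B"
proof (rule field_le_epsilon)
  fix e :: real assume e: "e > 0"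
  have ne: "{measure P X | X. X \<in> sets P \<and> C \<subseteq> X} \<noteq> {}" if "C \<subseteq> space P" for C
    using that by auto
  obtain X where X: "X \<in> sets P" "A \<subseteq> X" "measure P X < oprob P A + e/2"
  proof -
    have "Inf {measure P X | X. X \<in> sets P \<and> A \<subseteq> X} < oprob P A + e/2"
      using e unfolding oprob_def by simp
    from cInf_lessD[OF ne[OF A] this] show ?thesis using that by auto
  qed
  obtain Y where Y: "Y \<in> sets P" "B \<subseteq> Y" "measure P Y < oprob P B + e/2"
  proof -
    have "Inf {measure P X | X. X \<in> sets P \<and> B \<subseteq> X} < oprob P B + e/2"
      using e unfolding oprob_def by simp
    from cInf_lessD[OF ne[OF B] this] show ?thesis using that by auto
  qed
  have "oprob P (A \<union> B) \<le> measure P (X \<union> Y)"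
    using X Y by (intro oprob_le[OF P]) auto
  also have "\<dots> \<le> measure P X + measure P Y" using X Y by (intro measure_Un_le) auto
  finally show "oprob P (A \<union> B) \<le> oprob P A + oprob P B + e" using X Y by linarith
qed

lemma oprob_empty: "prob_space P \<Longrightarrow> oprob P {} \<le> 0"
  using oprob_le[of P "{}" "{}"] by auto

lemma oprob_UN:
  assumes P: "prob_space P" and F: "finite F" and sub: "\<forall>i\<in>F. A i \<subseteq> space P"
  shows "oprob P (\<Union>i\<in>F. A i) \<le> (\<Sum>i\<in>F. oprob P (A i))"
  using F sub
proof (induction F rule: finite_induct)
  case empty then show ?case using oprob_empty[OF P] by simp
next
  case (insert x F)
  have "oprob P (\<Union>i\<in>insert x F. A i) = oprob P (A x \<union> (\<Union>i\<in>F. A i))" by simp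
  also have "\<dots> \<le> oprob P (A x) + oprob P (\<Union>i\<in>F. A i)"
    using insert by (intro oprob_Un[OF P]) auto
  also have "\<dots> \<le> oprob P (A x) + (\<Sum>i\<in>F. oprob P (A i))" using insert by auto
  finally show ?case using insert by simp
qed

lemma snorm_le: "snorm (w::'d::finite site) \<le> real K \<Longrightarrow> \<bar>w$i\<bar> \<le> int K"
proof -
  assume h: "snorm w \<le> real K"
  have "\<bar>w$i\<bar> \<le> Max (range (\<lambda>i. \<bar>w$i\<bar>))" by (rule Max_ge) auto
  then have "real_of_int \<bar>w$i\<bar> \<le> snorm w" unfolding snorm_def by linarith
  with h show ?thesis by linarith
qed

lemma ball_card:
  "finite {w::'d::finite site. snorm w \<le> real K} \<and> card {w::'d::finite site. snorm w \<le> real K} \<le> (2*K+1)^CARD('d)"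
proof -
  let ?S = "PiE (UNIV::'d set) (\<lambda>_. {-int K..int K})"
  have sub: "{w::'d site. snorm w \<le> real K} \<subseteq> (\<lambda>f. vec_lambda f) ` ?S"
  proof
    fix w :: "'d site" assume "w \<in> {w. snorm w \<le> real K}"
    then have "\<forall>i. \<bar>w$i\<bar> \<le> int K" using snorm_le by auto
    then have "\<forall>i. -int K \<le> w$i \<and> w$i \<le> int K" by (metis abs_le_D1 abs_le_D2 minus_le_iff)
    then have "(\<lambda>i. w$i) \<in> ?S" by (auto simp: PiE_iff)
    moreover have "w = vec_lambda (\<lambda>i. w$i)" by simp
    ultimately show "w \<in> (\<lambda>f. vec_lambda f) ` ?S" by blast
  qed
  have fS: "finite ?S" by (intro finite_PiE) auto
  have cS: "card ?S = (2*K+1)^CARD('d)"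
  proof -
    have e: "nat (2 * int K) = 2*K" by simp
    show ?thesis by (subst card_PiE) (auto simp: nat_add_distrib e)
  qed
  have fI: "finite ((\<lambda>f. vec_lambda f) ` ?S)" using fS by simp
  have "card {w::'d site. snorm w \<le> real K} \<le> card ((\<lambda>f. vec_lambda f) ` ?S)"
    by (rule card_mono[OF fI sub])
  also have "\<dots> \<le> card ?S" by (rule card_image_le[OF fS])
  finally have "card {w::'d site. snorm w \<le> real K} \<le> (2*K+1)^CARD('d)" using cS by simp
  moreover have "finite {w::'d site. snorm w \<le> real K}" by (rule finite_subset[OF sub fI])
  ultimately show ?thesis by blast
qed

lemma cdiff_nth: "length x = m \<Longrightarrow> length v = m \<Longrightarrow> i < m \<Longrightarrow> cdiff x v ! i = x!i - v!i"
  unfolding cdiff_def by simp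

lemma cube_card:
  fixes v :: "'d::finite conf"
  assumes v: "length v = m"
  shows "finite (cube m (real K) v) \<and> card (cube m (real K) v) \<le> (2*K+1)^(CARD('d)*m)"
proof -
  let ?B = "{w::'d site. snorm w \<le> real K}"
  let ?Z = "{z. set z \<subseteq> ?B \<and> length z = m}"
  note bc = ball_card[where 'd='d and K=K]
  have fB: "finite ?B" by (rule conjunct1[OF bc])
  have cB: "card ?B \<le> (2*K+1)^CARD('d)" by (rule conjunct2[OF bc])
  have fZ: "finite ?Z" using fB by (rule finite_lists_length_eq)
  have cZ: "card ?Z = card ?B ^ m" using fB by (rule card_lists_length_eq)
  have inj: "inj_on (\<lambda>x. cdiff x v) (cube m (real K) v)"
  proof (rule inj_onI)
    fix x y assume x: "x \<in> cube m (real K) v" and y: "y \<in> cube m (real K) v" and e: "cdiff x v = cdiff y v"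
    have lx: "length x = m" and ly: "length y = m" using x y by (auto simp: cube_def)
    show "x = y"
    proof (rule nth_equalityI)
      show "length x = length y" using lx ly by simp
      fix i assume "i < length x"
      then have "cdiff x v ! i = x!i - v!i" "cdiff y v ! i = y!i - v!i"
        using lx ly v cdiff_nth by auto
      then show "x!i = y!i" using e by simp
    qed
  qed
  have img: "(\<lambda>x. cdiff x v) ` cube m (real K) v \<subseteq> ?Z"
  proof (rule image_subsetI, rule CollectI, rule conjI)
    fix x assume x: "x \<in> cube m (real K) v"
    have lx: "length x = m" and cn: "cnorm (cdiff x v) \<le> real K" using x by (auto simp: cube_def)
    show "length (cdiff x v) = m" using lx v by (simp add: cdiff_def)
  next
    fix x assume x: "x \<in> cube m (real K) v"
    have lx: "length x = m" and cn: "cnorm (cdiff x v) \<le> real K" using x by (auto simp: cube_def)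
    show "set (cdiff x v) \<subseteq> ?B"
    proof
      fix w assume w: "w \<in> set (cdiff x v)"
      have "snorm w \<le> cnorm (cdiff x v)" unfolding cnorm_def
        by (rule Max_ge) (use w in auto)
      then show "w \<in> ?B" using cn by simp
    qed
  qed
  have fin: "finite (cube m (real K) v)"
    using inj img fZ by (meson finite_imageD finite_subset)
  have "card (cube m (real K) v) \<le> card ?Z" using inj img fZ by (rule card_inj_on_le)
  also have "\<dots> \<le> ((2*K+1)^CARD('d))^m" using cZ cB by (simp add: power_mono)
  finally show ?thesis using fin by (simp add: power_mult)
qed

lemma oprob_mono:
  assumes "A \<subseteq> B" "B \<subseteq> space P"
  shows "oprob P A \<le> oprob P B"
  unfolding oprob_def
  by (rule cInf_superset_mono) (use assms in \<open>auto intro!: bdd_belowI[of _ 0]\<close>)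

lemma oprob_le1: "prob_space P \<Longrightarrow> A \<subseteq> space P \<Longrightarrow> oprob P A \<le> 1"
  using oprob_le[of P "space P" A] prob_space.prob_space by fastforce

lemma snorm_zero: "snorm (0::'d::finite site) = 0"
  unfolding snorm_def by simp

lemma cnorm_self: "cnorm (cdiff x x) = 0"
proof -
  have "set (map snorm (cdiff x x)) \<subseteq> {0}"
    unfolding cdiff_def by (auto simp: snorm_zero set_zip)
  then have "insert 0 (set (map snorm (cdiff x x))) = {0}" by auto
  then show ?thesis unfolding cnorm_def by (metis Max_singleton)
qed

lemma center_in_cube: "length x = m \<Longrightarrow> L \<ge> 0 \<Longrightarrow> x \<in> cube m L x"
  unfolding cube_def by (simp add: cnorm_self)


theorem lemma3p3:
  fixes P :: "'w measure" and V :: "(int^'d::finite) \<Rightarrow> 'w \<Rightarrow> real" and mu :: "real measure"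
    and U :: "(int^'d) \<Rightarrow> (int^'d) \<Rightarrow> real"
    and N n k L0 :: nat and r g M M1 r0 rho p0 :: real
    and C0 tau s0 rr :: "nat \<Rightarrow> real"
    and u :: "(int^'d) list" and J :: "nat set"
  assumes P: "prob_space P"
    and mu: "prob_space mu" "sets mu = sets borel"
    and supp: "measure mu {-M..M} = 1"
    and hoelder: "rho > 0" "\<exists>C. \<forall>a b. a \<le> b \<longrightarrow> measure mu {a..b} \<le> C * (b - a) powr rho"
    and iid: "prob_space.indep_vars P (\<lambda>_. borel) V UNIV" "\<forall>x. distr P borel (V x) = mu"
    and N: "N \<ge> 2" and r: "r > 0" and g: "g \<noteq> 0"
    and U: "\<forall>x y. U x y = U y x" "\<forall>x y. \<bar>U x y\<bar> \<le> M1" "\<forall>x y. snorm (x - y) \<ge> r0 \<longrightarrow> U x y = 0"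
    and r0: "r0 \<ge> 1"
    and params: "\<forall>m. 1 \<le> m \<and> m \<le> N \<longrightarrow>
                   C0 m > 0 \<and> tau m \<ge> 0 \<and> real m * CARD('d) / 2 < s0 m \<and> s0 m \<le> rr m
                   \<and> rr m < r - real m * CARD('d) / 2"
    and p0: "p0 \<ge> 20 * real N * CARD('d)"
    and L0: "L0 \<ge> 1"
    and n: "2 \<le> n" "n \<le> N"
    and SS: "\<forall>m. 1 \<le> m \<and> m \<le> n - 1 \<longrightarrow> SSprop P r0 g r U V C0 tau s0 rr N M p0 L0 k m"
    and u: "length u = n" "partially_interactive r0 n (Lk L0 (Suc k)) u"
    and J: "decomposes r0 n (Lk L0 (Suc k)) u J"
  shows "oprob P {\<omega> \<in> space P. partially_tunneling r0 g r U V C0 tau s0 rr N M L0 k n u J \<omega>}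
           \<le> 3 ^ (2 * (n - 1) * CARD('d))
             * Lk L0 (Suc k) powr (- pexp N p0 (n - 1) / 2 + 2 * real (n - 1) * CARD('d))"
  proof -
  let ?Ls = "Lk L0 k" and ?Lb = "Lk L0 (Suc k)"
  define KK where "KK = L0 ^ (4 ^ Suc k)"
  define q where "q = pexp N p0 (n - 1)"
  define dd where "dd = CARD('d)"
  have Lb: "?Lb = real KK" unfolding Lk_def KK_def by simp
  have Lb4: "?Lb = ?Ls ^ 4" unfolding Lk_def by (simp add: power_mult[symmetric] mult.commute)
  have Lspos: "?Ls \<ge> 1" unfolding Lk_def using L0 by simp
  have Lbge: "?Lb \<ge> 1" unfolding Lk_def using L0 by simp
  have p0nn: "p0 \<ge> 0" using p0 by (smt (verit) of_nat_0_le_iff mult_nonneg_nonneg)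
  have T: "oprob P {\<omega> \<in> space P. tunneling r0 g r U V C0 tau s0 rr N M L0 k m v \<omega>}
      \<le> real (2*KK+1)^(2*(n-1)*dd) * ?Lb powr (-q/2)"
    if m1: "1 \<le> m" and m2: "m \<le> n - 1" and lv: "length v = m" for m v
  proof -
    let ?C = "cube m ?Lb v"
    have cc: "finite ?C \<and> card ?C \<le> (2*KK+1)^(CARD('d)*m)"
      unfolding Lb by (rule cube_card[OF lv])
    then have fC: "finite ?C" and cC: "card ?C \<le> (2*KK+1)^(dd*m)" unfolding dd_def by auto
    define A where "A z = (if length (fst z) = m \<and> length (snd z) = m \<and> separable r0 m ?Ls (fst z) (snd z)
        then {\<omega> \<in> space P. \<exists>E\<in>Ienergy N M.
            \<not> NS g r U V C0 tau s0 rr m ?Ls (fst z) E \<omega> \<and> \<not> NS g r U V C0 tau s0 rr m ?Ls (snd z) E \<omega>}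
        else {})" for z
    have sub: "{\<omega> \<in> space P. tunneling r0 g r U V C0 tau s0 rr N M L0 k m v \<omega>} \<subseteq> (\<Union>z\<in>?C \<times> ?C. A z)"
    proof
      fix \<omega> assume "\<omega> \<in> {\<omega> \<in> space P. tunneling r0 g r U V C0 tau s0 rr N M L0 k m v \<omega>}"
      then obtain E x y where w: "\<omega> \<in> space P" and E: "E \<in> Ienergy N M" and xy: "length x = m" "length y = m"
        "separable r0 m ?Ls x y" "cube m ?Ls x \<subseteq> ?C" "cube m ?Ls y \<subseteq> ?C"
        "\<not> NS g r U V C0 tau s0 rr m ?Ls x E \<omega>" "\<not> NS g r U V C0 tau s0 rr m ?Ls y E \<omega>"
        unfolding tunneling_def by blast
      have "x \<in> ?C" using xy center_in_cube[of x m ?Ls] Lspos by auto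
      moreover have "y \<in> ?C" using xy center_in_cube[of y m ?Ls] Lspos by auto
      moreover have "\<omega> \<in> A (x, y)" using w E xy unfolding A_def by auto
      ultimately show "\<omega> \<in> (\<Union>z\<in>?C \<times> ?C. A z)" by blast
    qed
    have Az: "oprob P (A z) \<le> ?Ls powr (-2 * pexp N p0 m)" for z
    proof (cases "length (fst z) = m \<and> length (snd z) = m \<and> separable r0 m ?Ls (fst z) (snd z)")
      case True
      have "SSprop P r0 g r U V C0 tau s0 rr N M p0 L0 k m" using SS m1 m2 by auto
      then have "oprob P (A z) < ?Ls powr (-2 * pexp N p0 m)"
        using True unfolding SSprop_def A_def by auto
      then show ?thesis by simp
    next
      case False
      then have "A z = {}" unfolding A_def by auto
      then show ?thesis using oprob_empty[OF P] by (metis order_trans powr_ge_zero)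
    qed
    have "oprob P {\<omega> \<in> space P. tunneling r0 g r U V C0 tau s0 rr N M L0 k m v \<omega>} \<le> oprob P (\<Union>z\<in>?C \<times> ?C. A z)"
      by (rule oprob_mono[OF sub]) (auto simp: A_def)
    also have "\<dots> \<le> (\<Sum>z\<in>?C \<times> ?C. oprob P (A z))"
      by (rule oprob_UN[OF P]) (use fC in \<open>auto simp: A_def\<close>)
    also have "\<dots> \<le> (\<Sum>z\<in>?C \<times> ?C. ?Ls powr (-2 * pexp N p0 m))"
      by (rule sum_mono) (rule Az)
    also have "\<dots> = real (card ?C) ^ 2 * ?Ls powr (-2 * pexp N p0 m)"
      by (simp add: card_cartesian_product power2_eq_square)
    also have "\<dots> \<le> real (2*KK+1)^(2*(n-1)*dd) * ?Lb powr (-q/2)"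
    proof (rule mult_mono)
      have "real (card ?C) ^ 2 \<le> (real (2*KK+1)^(dd*m))^2"
      proof (rule power_mono)
        have "real (card ?C) \<le> real ((2*KK+1)^(dd*m))" using cC by (simp only: of_nat_le_iff)
        then show "real (card ?C) \<le> real (2*KK+1)^(dd*m)" by (simp only: of_nat_power)
      qed simp
      also have "\<dots> = real (2*KK+1)^(2*m*dd)" by (simp add: power_mult[symmetric] ac_simps)
      also have "\<dots> \<le> real (2*KK+1)^(2*(n-1)*dd)" using m2 by (intro power_increasing) auto
      finally show "real (card ?C) ^ 2 \<le> real (2*KK+1)^(2*(n-1)*dd)" .
      have "?Ls powr (-2 * pexp N p0 m) = (?Ls powr 4) powr (- pexp N p0 m / 2)"
        by (simp add: powr_powr)
      also have "\<dots> = ?Lb powr (- pexp N p0 m / 2)"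
        using Lspos by (simp add: Lb4 powr_realpow)
      also have "\<dots> \<le> ?Lb powr (-q/2)"
      proof (rule powr_mono[OF _ Lbge])
        have "(18::real) ^ (N - (n - 1)) \<le> 18 ^ (N - m)" using m2 by (intro power_increasing) auto
        then have "q \<le> pexp N p0 m" unfolding q_def pexp_def using p0nn by (intro mult_right_mono) auto
        then show "- pexp N p0 m / 2 \<le> -q/2" by simp
      qed
      finally show "?Ls powr (-2 * pexp N p0 m) \<le> ?Lb powr (-q/2)" .
    qed auto
    finally show ?thesis .
  qed
  have J1: "J \<noteq> {}" "J \<subset> {0..<n}" using J unfolding decomposes_def by auto
  have fJ: "finite J" using J1 finite_subset by blast
  have cJ: "card J < n" using psubset_card_mono[OF _ J1(2)] by simp
  have cJ1: "card J \<ge> 1" using J1 fJ by (simp add: Suc_leI card_gt_0_iff)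
  have l1: "length (nths u J) = card J"
  proof -
    have "{i. i < length u \<and> i \<in> J} = J" using J1 u(1) by auto
    then show ?thesis by (simp add: length_nths)
  qed
  have l2: "length (nths u ({0..<n} - J)) = n - card J"
  proof -
    have "{i. i < length u \<and> i \<in> {0..<n} - J} = {0..<n} - J" using u(1) by auto
    then show ?thesis using J1 fJ by (simp add: length_nths card_Diff_subset)
  qed
  let ?T1 = "{\<omega> \<in> space P. tunneling r0 g r U V C0 tau s0 rr N M L0 k (card J) (nths u J) \<omega>}"
  let ?T2 = "{\<omega> \<in> space P. tunneling r0 g r U V C0 tau s0 rr N M L0 k (n - card J) (nths u ({0..<n} - J)) \<omega>}"
  have eq: "{\<omega> \<in> space P. partially_tunneling r0 g r U V C0 tau s0 rr N M L0 k n u J \<omega>} = ?T1 \<union> ?T2"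
    unfolding partially_tunneling_def by auto
  have "oprob P (?T1 \<union> ?T2) \<le> oprob P ?T1 + oprob P ?T2" by (rule oprob_Un[OF P]) auto
  also have "\<dots> \<le> 2 * (real (2*KK+1)^(2*(n-1)*dd) * ?Lb powr (-q/2))"
  proof -
    have "oprob P ?T1 \<le> real (2*KK+1)^(2*(n-1)*dd) * ?Lb powr (-q/2)"
      by (rule T) (use cJ cJ1 l1 in auto)
    moreover have "oprob P ?T2 \<le> real (2*KK+1)^(2*(n-1)*dd) * ?Lb powr (-q/2)"
      by (rule T) (use cJ cJ1 l2 in auto)
    ultimately show ?thesis by linarith
  qed
  finally have main: "oprob P (?T1 \<union> ?T2) \<le> 2 * (real (2*KK+1)^(2*(n-1)*dd) * ?Lb powr (-q/2))" .
  show ?thesis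
  proof (cases "L0 = 1")
    case True
    have "?Lb = 1" unfolding Lk_def True by simp
    then have r1: "3 ^ (2 * (n - 1) * CARD('d)) * ?Lb powr (- q / 2 + 2 * real (n - 1) * CARD('d)) \<ge> (1::real)"
      by simp
    have "oprob P (?T1 \<union> ?T2) \<le> 1" by (rule oprob_le1[OF P]) auto
    then show ?thesis using r1 eq unfolding q_def by simp
  next
    case False
    then have L02: "L0 \<ge> 2" using L0 by simp
    have "(4::nat) \<le> 4 ^ Suc k" by simp
    have k1: "(2::nat) ^ 4 \<le> L0 ^ 4" by (rule power_mono) (use L02 in auto)
    have k2: "L0 ^ 4 \<le> L0 ^ (4 ^ Suc k)" by (rule power_increasing) (use L02 \<open>(4::nat) \<le> 4 ^ Suc k\<close> in auto)
    have "(16::nat) \<le> KK" using k1 k2 unfolding KK_def by simp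
    then have KK16: "real KK \<ge> 16" by simp
    have dpos: "dd \<ge> 1" unfolding dd_def by (simp add: Suc_leI)
    define e where "e = 2 * (n - 1) * dd"
    have e2: "e \<ge> 2" unfolding e_def using n dpos by (simp add: Suc_le_eq)
    obtain e' where e': "e = e' + 2" using e2 by (metis le_add_diff_inverse2)
    have "2 * real (2*KK+1)^e \<le> (3 * real KK)^e"
    proof -
      have a: "real (2*KK+1)^e' \<le> (3 * real KK)^e'" using KK16 by (intro power_mono) auto
      have kk: "16 * real KK \<le> real KK * real KK" using KK16 mult_right_mono[of 16 "real KK" "real KK"] by simp
      have b1: "2 * real (2*KK+1)^2 = 8 * (real KK * real KK) + 8 * real KK + 2" by (simp add: power2_eq_square algebra_simps)
      have b2: "(3 * real KK)^2 = 9 * (real KK * real KK)" by (simp add: power2_eq_square algebra_simps)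
      have b: "2 * real (2*KK+1)^2 \<le> (3 * real KK)^2" unfolding b1 b2 using kk KK16 by linarith
      have "2 * real (2*KK+1)^e = real (2*KK+1)^e' * (2 * real (2*KK+1)^2)" by (simp add: e' power_add power2_eq_square)
      also have "\<dots> \<le> (3 * real KK)^e' * (3 * real KK)^2" using a b by (intro mult_mono) auto
      also have "\<dots> = (3 * real KK)^e" by (simp only: e' power_add)
      finally show ?thesis .
    qed
    then have "2 * (real (2*KK+1)^e * ?Lb powr (-q/2)) \<le> (3 * real KK)^e * ?Lb powr (-q/2)"
      using mult_right_mono[of "2 * real (2*KK+1)^e" "(3 * real KK)^e" "?Lb powr (-q/2)"] by (simp add: mult.assoc)
    also have "\<dots> = 3 ^ e * (?Lb powr (-q/2) * ?Lb powr (real e))"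
      using Lbge by (simp add: Lb power_mult_distrib powr_realpow)
    also have "\<dots> = 3 ^ e * ?Lb powr (-q/2 + real e)" by (simp only: powr_add)
    finally show ?thesis using main eq unfolding e_def q_def dd_def by simp
  qed
qed

end
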